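(* In the DID setting of the context with $N_1\ge1$ fixed, suppose Assumptions 1 and 2 hold. Consider testing $H_0:\alpha=\alpha_0$ at significance level $\tau$ by rejecting when $\widehat\alpha-\alpha_0$ is below the $\tau/2$-quantile or above the $1-\tau/2$-quantile of $\widehat F$. Then, as $N_0\to\infty$, this test is asymptotically of level $\tau$ (the limiting rejection probability under $H_0$ is at most $\tau$), for every $\tau\in(0,1)$.
   Context: Units $i\in\mathcal I_1$ (treated, $|\mathcal I_1|=N_1$) and $i\in\mathcal I_0$ (control, $|\mathcal I_0|=N_0$), periods $t=1,\dots,T$; $\mathcal T_0=\{1,\dots,t^\ast\}$, $\mathcal T_1=\{t^\ast+1,\dots,T\}$, $T$ fixed. Potential outcomes: $Y_{it}(0)=\theta_i+\gamma_t+\eta_{it}$, $Y_{it}(1)=\alpha_{it}+Y_{it}(0)$; observed $Y_{it}=Y_{it}(1)$ if $i\in\mathcal I_1,t\in\mathcal T_1$, else $Y_{it}(0)$. The $\alpha_{it}$ are fixed and $\alpha=\frac{1}{N_1}\frac{1}{T-t^\ast}\sum_{i\in\mathcal I_1}\sum_{t\in\mathcal T_1}\alpha_{it}$. For a sequence $A_t$, $\nabla A=\frac{1}{T-t^\ast}\sum_{t\in\mathcal T_1}A_t-\frac{1}{t^\ast}\sum_{t\in\mathcal T_0}A_t$; $W_i=\nabla\eta_{i\cdot}$. $\widehat\alpha=\frac{1}{N_1}\sum_{i\in\mathcal I_1}\nabla Y_i-\frac{1}{N_0}\sum_{i\in\mathcal I_0}\nabla Y_i$; control residuals $\widehat W_i=\nabla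 Y_i-\frac1{N_0}\sum_{j\in\mathcal I_0}\nabla Y_j$; $\widehat F(c)=N_0^{-1}\sum_{i\in\mathcal I_0}\mathbbm 1\{\widehat W_i\le c\}$. Treatment assignment is fixed. Assumption 1: (i) $\mathbb E[W_i]=0$ for all $i$; (ii) all $W_i$ have the same marginal distribution, with continuous cdf $F$ and finite second moment; (iii) as $N_0\to\infty$, $\frac1{N_0}\sum_{i\in\mathcal I_0}W_i\xrightarrow{p}0$ and $\frac1{N_0}\sum_{i\in\mathcal I_0}\mathbbm 1\{W_i\le c\}\xrightarrow{p}F(c)$ for each $c$. The errors of the treated units may be arbitrarily correlated with each other. Assumption 2: for every $\tau\in(0,1)$, letting $c_\tau$ denote the $\tau$-quantile of $F$ and $\widetilde W=N_1^{-1}\sum_{i\in\mathcal I_1}W_i$, one has $\Pr(\{\widetilde W\le c_{\tau/2}\}\cup\{\widetilde W>c_{1-\tau/2}\})\le\tau$. *)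

theory Defs
  imports "HOL-Probability.Probability"
begin

definition nabla :: "nat \<Rightarrow> nat \<Rightarrow> (nat \<Rightarrow> real) \<Rightarrow> real" where
  "nabla tstar T A =
     (\<Sum>t\<in>{tstar<..T}. A t) / real (T - tstar) - (\<Sum>t\<in>{1..tstar}. A t) / real tstar"

definition quantile :: "(real \<Rightarrow> real) \<Rightarrow> real \<Rightarrow> real" where
  "quantile G p = Inf {c. p \<le> G c}"

definition conv_prob :: "'a measure \<Rightarrow> (nat \<Rightarrow> 'a \<Rightarrow> real) \<Rightarrow> real \<Rightarrow> bool" where
  "conv_prob M X L \<longleftrightarrow>
     (\<forall>e>0. (\<lambda>n. measure M {\<omega>\<in>space M. \<bar>X n \<omega> - L\<bar> > e}) \<longlonglongrightarrow> 0)"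

end

theory Submission
  imports Defs
begin

lemma nabla_add: "nabla s T (\<lambda>t. f t + g t) = nabla s T f + nabla s T g"
  by (simp add: nabla_def sum.distrib add_divide_distrib)

lemma nabla_const: "1 \<le> s \<Longrightarrow> s < T \<Longrightarrow> nabla s T (\<lambda>t. c) = 0"
  by (simp add: nabla_def)

lemma nabla_post: "nabla s T (\<lambda>t. if t \<in> {s<..T} then a t else 0) = (\<Sum>t\<in>{s<..T}. a t) / real (T - s)"
proof -
  have "(\<Sum>t\<in>{1..s}. (if t \<in> {s<..T} then a t else 0)) = 0" by (intro sum.neutral) auto
  moreover have "(\<Sum>t\<in>{s<..T}. (if t \<in> {s<..T} then a t else 0)) = (\<Sum>t\<in>{s<..T}. a t)"
    by (intro sum.cong) auto
  ultimately show ?thesis by (simp add: nabla_def)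
qed

lemma emp_mono:
  fixes w :: "nat \<Rightarrow> real"
  assumes "c \<le> d"
  shows "(\<Sum>j<N. if w j \<le> c then 1 else 0) / real N \<le> (\<Sum>j<N. if w j \<le> d then 1 else (0::real)) / real N"
  by (intro divide_right_mono sum_mono) (use assms in auto)

lemma emp_bdd:
  fixes w :: "nat \<Rightarrow> real" and p :: real
  assumes "0 < p"
  shows "bdd_below {c. p \<le> (\<Sum>j<N. if w j \<le> c then 1 else 0) / real N}"
proof (rule bdd_belowI)
  fix c assume "c \<in> {c. p \<le> (\<Sum>j<N. if w j \<le> c then 1 else 0) / real N}"
  hence h: "p \<le> (\<Sum>j<N. if w j \<le> c then 1 else 0) / real N" by simp
  show "- (\<Sum>j<N. \<bar>w j\<bar>) \<le> c"
  proof (rule ccontr)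
    assume "\<not> - (\<Sum>j<N. \<bar>w j\<bar>) \<le> c"
    hence c: "c < - (\<Sum>j<N. \<bar>w j\<bar>)" by simp
    have "\<And>j. j < N \<Longrightarrow> \<not> w j \<le> c"
    proof -
      fix j assume "j < N"
      hence "\<bar>w j\<bar> \<le> (\<Sum>j<N. \<bar>w j\<bar>)" by (intro member_le_sum) auto
      thus "\<not> w j \<le> c" using c by linarith
    qed
    hence "(\<Sum>j<N. if w j \<le> c then 1 else (0::real)) = 0" by (intro sum.neutral) auto
    thus False using h assms by simp
  qed
qed

lemma emp_ne:
  fixes w :: "nat \<Rightarrow> real" and p :: real
  assumes "0 < N" "p \<le> 1"
  shows "(\<Sum>j<N. \<bar>w j\<bar>) \<in> {c. p \<le> (\<Sum>j<N. if w j \<le> c then 1 else 0) / real N}"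
proof -
  have "(\<Sum>j<N. if w j \<le> (\<Sum>j<N. \<bar>w j\<bar>) then 1 else (0::real)) = (\<Sum>j<N. 1)"
  proof (intro sum.cong refl)
    fix j assume "j \<in> {..<N}"
    hence "\<bar>w j\<bar> \<le> (\<Sum>j<N. \<bar>w j\<bar>)" by (intro member_le_sum) auto
    thus "(if w j \<le> (\<Sum>j<N. \<bar>w j\<bar>) then 1 else (0::real)) = 1" by auto
  qed
  thus ?thesis using assms by simp
qed

lemma cdf_quantile:
  fixes X :: "'a \<Rightarrow> real" and F :: "real \<Rightarrow> real"
  assumes P: "prob_space M" and X: "X \<in> borel_measurable M"
    and F: "\<And>c. measure M {\<omega>\<in>space M. X \<omega> \<le> c} = F c"
    and cont: "continuous_on UNIV F"
    and q: "0 < q" "q < 1"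
  shows "F (quantile F q) = q"
proof -
  interpret prob_space M by (rule P)
  interpret D: real_distribution "distr M borel X" using X by simp
  have FF: "F = cdf (distr M borel X)"
  proof
    fix c
    have "cdf (distr M borel X) c = measure M (X -` {..c} \<inter> space M)"
      using X by (simp add: cdf_def measure_distr)
    also have "X -` {..c} \<inter> space M = {\<omega>\<in>space M. X \<omega> \<le> c}" by auto
    finally show "F c = cdf (distr M borel X) c" using F by simp
  qed
  have mono: "\<And>a b. a \<le> b \<Longrightarrow> F a \<le> F b" unfolding FF by (rule D.cdf_nondecreasing)
  have "eventually (\<lambda>c. F c > q) at_top"
    using D.cdf_lim_at_top_prob q unfolding FF by (simp add: order_tendstoD)
  then obtain c0 where c0: "F c0 > q" unfolding eventually_at_top_linorder by blast
  have "eventually (\<lambda>c. F c < q) at_bot"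
    using D.cdf_lim_at_bot q unfolding FF by (simp add: order_tendstoD)
  then obtain L where L: "F L < q" unfolding eventually_at_bot_linorder by blast
  define S where "S = {c. q \<le> F c}"
  have "c0 \<in> S" using c0 by (simp add: S_def)
  hence ne: "S \<noteq> {}" by blast
  have bdd: "bdd_below S"
  proof (rule bdd_belowI)
    fix c assume "c \<in> S"
    hence "q \<le> F c" by (simp add: S_def)
    show "L \<le> c"
    proof (rule ccontr)
      assume "\<not> L \<le> c"
      hence "F c \<le> F L" using mono by simp
      thus False using L \<open>q \<le> F c\<close> by simp
    qed
  qed
  have cl: "closed S" unfolding S_def
    by (intro closed_Collect_le continuous_on_const cont)
  have inS: "Inf S \<in> S" by (rule closed_contains_Inf[OF ne bdd cl])
  have qdef: "quantile F q = Inf S" by (simp add: quantile_def S_def)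
  have ge: "q \<le> F (Inf S)" using inS by (simp add: S_def)
  have le: "F (Inf S) \<le> q"
  proof (rule ccontr)
    assume "\<not> F (Inf S) \<le> q"
    hence e: "F (Inf S) - q > 0" by simp
    from cont have "isCont F (Inf S)" by (simp add: continuous_on_eq_continuous_at)
    then obtain d where d: "d > 0" "\<And>x. dist x (Inf S) < d \<Longrightarrow> dist (F x) (F (Inf S)) < F (Inf S) - q"
      using e continuous_at_eps_delta by blast
    have "dist (Inf S - d/2) (Inf S) < d" using d by (simp add: dist_real_def)
    hence "dist (F (Inf S - d/2)) (F (Inf S)) < F (Inf S) - q" using d by blast
    hence "q \<le> F (Inf S - d/2)" by (simp add: dist_real_def abs_if split: if_splits)
    hence "Inf S - d/2 \<in> S" by (simp add: S_def)
    hence "Inf S \<le> Inf S - d/2" using bdd by (rule cInf_lower)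
    thus False using d by simp
  qed
  show ?thesis using ge le qdef by simp
qed


theorem proposition2:
  fixes M :: "'a measure" and I1 :: "'u set" and ctrl :: "nat \<Rightarrow> 'u"
    and tstar T :: nat
    and alpha_it :: "'u \<Rightarrow> nat \<Rightarrow> real"
    and theta :: "'u \<Rightarrow> 'a \<Rightarrow> real" and gamma :: "nat \<Rightarrow> 'a \<Rightarrow> real"
    and eta :: "'u \<Rightarrow> nat \<Rightarrow> 'a \<Rightarrow> real"
    and F :: "real \<Rightarrow> real" and alpha0 :: real
  assumes P: "prob_space M"
    and I1_fin: "finite I1" and N1_pos: "card I1 \<ge> 1"
    and ctrl_inj: "inj ctrl" and ctrl_disj: "range ctrl \<inter> I1 = {}"
    and tstar_pos: "1 \<le> tstar" and tstar_lt: "tstar < T"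
  defines "Y \<equiv> \<lambda>i t \<omega>. (if i \<in> I1 \<and> t \<in> {tstar<..T} then alpha_it i t else 0)
                      + theta i \<omega> + gamma t \<omega> + eta i t \<omega>"
  defines "W \<equiv> \<lambda>i \<omega>. nabla tstar T (\<lambda>t. eta i t \<omega>)"
    and "U \<equiv> I1 \<union> range ctrl"
  assumes eta_meas: "\<forall>i\<in>U. \<forall>t\<in>{1..T}. eta i t \<in> borel_measurable M"
    and A1_i: "\<forall>i\<in>U. integral\<^sup>L M (W i) = 0"
    and A1_ii_dist: "\<forall>i\<in>U. \<forall>j\<in>U. distr M borel (W i) = distr M borel (W j)"
    and A1_ii_cdf: "\<forall>i\<in>U. \<forall>c. measure M {\<omega>\<in>space M. W i \<omega> \<le> c} = F c"
    and A1_ii_cont: "continuous_on UNIV F"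
    and A1_ii_mom: "\<forall>i\<in>U. integrable M (\<lambda>\<omega>. (W i \<omega>)\<^sup>2)"
    and A1_iii_mean: "conv_prob M (\<lambda>N0 \<omega>. (\<Sum>j<N0. W (ctrl j) \<omega>) / real N0) 0"
    and A1_iii_cdf: "\<forall>c. conv_prob M
             (\<lambda>N0 \<omega>. (\<Sum>j<N0. if W (ctrl j) \<omega> \<le> c then 1 else 0) / real N0) (F c)"
    and A2: "\<forall>\<tau>\<in>{0<..<1::real}.
       measure M ({\<omega>\<in>space M. (\<Sum>i\<in>I1. W i \<omega>) / real (card I1) \<le> quantile F (\<tau>/2)}
                \<union> {\<omega>\<in>space M. (\<Sum>i\<in>I1. W i \<omega>) / real (card I1) > quantile F (1 - \<tau>/2)})
       \<le> \<tau>"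
  defines "dY \<equiv> \<lambda>i \<omega>. nabla tstar T (\<lambda>t. Y i t \<omega>)"
  defines "alpha_hat \<equiv> \<lambda>N0 \<omega>. (\<Sum>i\<in>I1. dY i \<omega>) / real (card I1)
                             - (\<Sum>j<N0. dY (ctrl j) \<omega>) / real N0"
  defines "W_hat \<equiv> \<lambda>N0 j \<omega>. dY (ctrl j) \<omega> - (\<Sum>k<N0. dY (ctrl k) \<omega>) / real N0"
  defines "F_hat \<equiv> \<lambda>N0 \<omega> c. (\<Sum>j<N0. if W_hat N0 j \<omega> \<le> c then 1 else 0) / real N0"
  assumes H0: "alpha0 = (\<Sum>i\<in>I1. \<Sum>t\<in>{tstar<..T}. alpha_it i t)
                        / (real (card I1) * real (T - tstar))"
  shows "\<forall>\<tau>\<in>{0<..<1::real}.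
     limsup (\<lambda>N0. ereal (measure M {\<omega>\<in>space M.
         alpha_hat N0 \<omega> - alpha0 < quantile (F_hat N0 \<omega>) (\<tau>/2)
       \<or> alpha_hat N0 \<omega> - alpha0 > quantile (F_hat N0 \<omega>) (1 - \<tau>/2)}))
     \<le> ereal \<tau>"
proof (intro ballI)
  fix \<tau> :: real assume \<tau>: "\<tau> \<in> {0<..<1}"
  interpret prob_space M by (rule P)
  have n1: "real (card I1) > 0" using N1_pos by simp
  have I1ne: "I1 \<noteq> {}" using N1_pos by auto
  then obtain i0 where i0: "i0 \<in> I1" by blast
  have i0U: "i0 \<in> U" using i0 U_def by simp
  have ctrlU: "\<And>j. ctrl j \<in> U" using U_def by simp
  have ctrlI1: "\<And>j. ctrl j \<notin> I1" using ctrl_disj by auto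
  have Wmeas: "\<And>i. i \<in> U \<Longrightarrow> W i \<in> borel_measurable M"
  proof -
    fix i assume i: "i \<in> U"
    have m: "\<And>t. t \<in> {tstar<..T} \<union> {1..tstar} \<Longrightarrow> eta i t \<in> borel_measurable M"
      using eta_meas i tstar_lt by auto
    show "W i \<in> borel_measurable M" unfolding W_def nabla_def
      by (intro borel_measurable_diff borel_measurable_divide borel_measurable_sum borel_measurable_const)
         (use m in auto)
  qed
  define Wt where "Wt = (\<lambda>\<omega>. (\<Sum>i\<in>I1. W i \<omega>) / real (card I1))"
  define Wb where "Wb = (\<lambda>N \<omega>. (\<Sum>j<N. W (ctrl j) \<omega>) / real N)"
  define G where "G = (\<lambda>N \<omega> c. (\<Sum>j<N. if W (ctrl j) \<omega> \<le> c then 1 else 0) / real N)"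
  define gg where "gg = (\<lambda>\<omega>. nabla tstar T (\<lambda>t. gamma t \<omega>))"
  define Aterm where "Aterm = (\<lambda>i. if i \<in> I1 then (\<Sum>t\<in>{tstar<..T}. alpha_it i t) / real (T - tstar) else 0)"
  have Wtm: "Wt \<in> borel_measurable M" unfolding Wt_def
    by (intro borel_measurable_divide borel_measurable_sum borel_measurable_const Wmeas) (auto simp: U_def)
  have Gm: "\<And>N c. (\<lambda>\<omega>. G N \<omega> c) \<in> borel_measurable M"
  proof -
    fix N c
    have "\<And>j. (\<lambda>\<omega>. if W (ctrl j) \<omega> \<le> c then 1 else (0::real)) \<in> borel_measurable M"
      using Wmeas[OF ctrlU] by measurable
    thus "(\<lambda>\<omega>. G N \<omega> c) \<in> borel_measurable M" unfolding G_def
      by (intro borel_measurable_divide borel_measurable_sum borel_measurable_const) auto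
  qed
  have dY_eq: "\<And>i \<omega>. dY i \<omega> = Aterm i + gg \<omega> + W i \<omega>"
  proof -
    fix i \<omega>
    have "dY i \<omega> = nabla tstar T (\<lambda>t. if i \<in> I1 \<and> t \<in> {tstar<..T} then alpha_it i t else 0)
        + nabla tstar T (\<lambda>t. theta i \<omega>) + gg \<omega> + W i \<omega>"
      unfolding dY_def Y_def W_def gg_def by (simp only: nabla_add)
    moreover have "nabla tstar T (\<lambda>t. theta i \<omega>) = 0" using tstar_pos tstar_lt by (rule nabla_const)
    moreover have "nabla tstar T (\<lambda>t. if i \<in> I1 \<and> t \<in> {tstar<..T} then alpha_it i t else 0) = Aterm i"
    proof (cases "i \<in> I1")
      case True
      thus ?thesis using nabla_post[of tstar T "alpha_it i"] by (simp add: Aterm_def)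
    next
      case False
      thus ?thesis using nabla_const[OF tstar_pos tstar_lt, of 0] by (simp add: Aterm_def)
    qed
    ultimately show "dY i \<omega> = Aterm i + gg \<omega> + W i \<omega>" by simp
  qed
  have sumA: "(\<Sum>i\<in>I1. Aterm i) / real (card I1) = alpha0"
  proof -
    have "(\<Sum>i\<in>I1. Aterm i) = (\<Sum>i\<in>I1. (\<Sum>t\<in>{tstar<..T}. alpha_it i t) / real (T - tstar))"
      by (intro sum.cong) (auto simp: Aterm_def)
    also have "\<dots> = (\<Sum>i\<in>I1. \<Sum>t\<in>{tstar<..T}. alpha_it i t) / real (T - tstar)"
      by (simp add: sum_divide_distrib)
    finally show ?thesis using H0 by (simp add: divide_divide_eq_left mult.commute)
  qed
  have sum_ctrl: "\<And>N \<omega>. (\<Sum>j<N. dY (ctrl j) \<omega>) = real N * gg \<omega> + (\<Sum>j<N. W (ctrl j) \<omega>)"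
    by (simp add: dY_eq Aterm_def ctrlI1 sum.distrib)
  have sum_tr: "\<And>\<omega>. (\<Sum>i\<in>I1. dY i \<omega>) = (\<Sum>i\<in>I1. Aterm i) + real (card I1) * gg \<omega> + (\<Sum>i\<in>I1. W i \<omega>)"
    by (simp add: dY_eq sum.distrib)
  have ah: "\<And>N \<omega>. 0 < N \<Longrightarrow> alpha_hat N \<omega> - alpha0 = Wt \<omega> - Wb N \<omega>"
  proof -
    fix N :: nat and \<omega> assume N: "0 < N"
    have "alpha_hat N \<omega> = ((\<Sum>i\<in>I1. Aterm i) + real (card I1) * gg \<omega> + (\<Sum>i\<in>I1. W i \<omega>)) / real (card I1)
       - (real N * gg \<omega> + (\<Sum>j<N. W (ctrl j) \<omega>)) / real N"
      unfolding alpha_hat_def sum_ctrl sum_tr by simp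
    also have "\<dots> = (\<Sum>i\<in>I1. Aterm i) / real (card I1) + Wt \<omega> - Wb N \<omega>"
      using n1 N unfolding Wt_def Wb_def by (simp add: add_divide_distrib)
    finally show "alpha_hat N \<omega> - alpha0 = Wt \<omega> - Wb N \<omega>" using sumA by simp
  qed
  have wh: "\<And>N j \<omega>. 0 < N \<Longrightarrow> W_hat N j \<omega> = W (ctrl j) \<omega> - Wb N \<omega>"
  proof -
    fix N :: nat and j \<omega> assume N: "0 < N"
    have "W_hat N j \<omega> = gg \<omega> + W (ctrl j) \<omega> - (real N * gg \<omega> + (\<Sum>j<N. W (ctrl j) \<omega>)) / real N"
      unfolding W_hat_def sum_ctrl by (simp add: dY_eq Aterm_def ctrlI1)
    also have "\<dots> = W (ctrl j) \<omega> - Wb N \<omega>" using N unfolding Wb_def by (simp add: add_divide_distrib)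
    finally show "W_hat N j \<omega> = W (ctrl j) \<omega> - Wb N \<omega>" .
  qed
  define R where "R = (\<lambda>N0. {\<omega>\<in>space M.
         alpha_hat N0 \<omega> - alpha0 < quantile (F_hat N0 \<omega>) (\<tau>/2)
       \<or> alpha_hat N0 \<omega> - alpha0 > quantile (F_hat N0 \<omega>) (1 - \<tau>/2)})"
  have main: "limsup (\<lambda>N. ereal (measure M (R N))) \<le> ereal \<tau>'" if \<tau>': "\<tau> < \<tau>'" "\<tau>' < 1" for \<tau>'
  proof -
    define x where "x = quantile F (\<tau>'/2)"
    define y where "y = quantile F (1 - \<tau>'/2)"
    have Fq: "\<And>q. 0 < q \<Longrightarrow> q < 1 \<Longrightarrow> F (quantile F q) = q"
      by (rule cdf_quantile[OF P Wmeas[OF i0U] _ A1_ii_cont]) (use A1_ii_cdf i0U in auto)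
    have Fx: "F x = \<tau>'/2" unfolding x_def using \<tau> \<tau>' by (intro Fq) auto
    have Fy: "F y = 1 - \<tau>'/2" unfolding y_def using \<tau> \<tau>' by (intro Fq) auto
    define e where "e = (\<tau>' - \<tau>) / 4"
    have e: "e > 0" using \<tau>' by (simp add: e_def)
    define E where "E = {\<omega>\<in>space M. (\<Sum>i\<in>I1. W i \<omega>) / real (card I1) \<le> quantile F (\<tau>'/2)}
                \<union> {\<omega>\<in>space M. (\<Sum>i\<in>I1. W i \<omega>) / real (card I1) > quantile F (1 - \<tau>'/2)}"
    have mE: "measure M E \<le> \<tau>'" unfolding E_def using A2 \<tau> \<tau>' by auto
    define D1 where "D1 = (\<lambda>N. {\<omega>\<in>space M. \<bar>G N \<omega> x - F x\<bar> > e})"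
    define D2 where "D2 = (\<lambda>N. {\<omega>\<in>space M. \<bar>G N \<omega> y - F y\<bar> > e})"
    have l1: "(\<lambda>N. measure M (D1 N)) \<longlonglongrightarrow> 0"
      using A1_iii_cdf e unfolding conv_prob_def D1_def G_def by blast
    have l2: "(\<lambda>N. measure M (D2 N)) \<longlonglongrightarrow> 0"
      using A1_iii_cdf e unfolding conv_prob_def D2_def G_def by blast
    have Es: "E \<in> sets M" unfolding E_def using Wtm unfolding Wt_def by measurable
    have D1s: "\<And>N. D1 N \<in> sets M" unfolding D1_def using Gm by measurable
    have D2s: "\<And>N. D2 N \<in> sets M" unfolding D2_def using Gm by measurable
    have sub: "R N \<subseteq> E \<union> D1 N \<union> D2 N" if N: "0 < N" for N
    proof
      fix \<omega> assume \<omega>R: "\<omega> \<in> R N"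
      hence sp: "\<omega> \<in> space M" by (simp add: R_def)
      show "\<omega> \<in> E \<union> D1 N \<union> D2 N"
      proof (rule ccontr)
        assume "\<omega> \<notin> E \<union> D1 N \<union> D2 N"
        hence nE: "\<omega> \<notin> E" and n1': "\<not> \<bar>G N \<omega> x - F x\<bar> > e" and n2: "\<not> \<bar>G N \<omega> y - F y\<bar> > e"
          using sp by (auto simp: D1_def D2_def)
        have Gx: "\<tau>/2 \<le> G N \<omega> x" using n1' Fx e_def \<tau>' by (simp add: abs_if split: if_splits)
        have Gy: "G N \<omega> y < 1 - \<tau>/2" using n2 Fy e_def \<tau>' by (simp add: abs_if split: if_splits)
        define wb where "wb = Wb N \<omega>"
        define w where "w = (\<lambda>j. W (ctrl j) \<omega> - wb)"
        have Fh: "F_hat N \<omega> = (\<lambda>c. (\<Sum>j<N. if w j \<le> c then 1 else 0) / real N)"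
          unfolding F_hat_def w_def wb_def using wh[OF N] by simp
        have shift: "\<And>c. F_hat N \<omega> (c - wb) = G N \<omega> c"
          unfolding Fh G_def w_def by (intro arg_cong[where f="\<lambda>s. s / real N"] sum.cong) auto
        have a: "alpha_hat N \<omega> - alpha0 = Wt \<omega> - wb" using ah[OF N] wb_def by simp
        have q1: "quantile (F_hat N \<omega>) (\<tau>/2) \<le> x - wb"
        proof -
          have "bdd_below {c. \<tau>/2 \<le> F_hat N \<omega> c}" unfolding Fh using \<tau> by (intro emp_bdd) auto
          moreover have "x - wb \<in> {c. \<tau>/2 \<le> F_hat N \<omega> c}" using shift Gx by simp
          ultimately show ?thesis unfolding quantile_def by (rule cInf_lower[rotated])
        qed
        have q2: "y - wb \<le> quantile (F_hat N \<omega>) (1 - \<tau>/2)"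
          unfolding quantile_def
        proof (rule cInf_greatest)
          show "{c. 1 - \<tau>/2 \<le> F_hat N \<omega> c} \<noteq> {}" unfolding Fh using emp_ne[OF N, of "1 - \<tau>/2" w] \<tau> by auto
        next
          fix c assume "c \<in> {c. 1 - \<tau>/2 \<le> F_hat N \<omega> c}"
          hence c: "1 - \<tau>/2 \<le> F_hat N \<omega> c" by simp
          show "y - wb \<le> c"
          proof (rule ccontr)
            assume "\<not> y - wb \<le> c"
            hence "F_hat N \<omega> c \<le> F_hat N \<omega> (y - wb)" unfolding Fh by (intro emp_mono) simp
            thus False using c Gy shift by simp
          qed
        qed
        from \<omega>R have "Wt \<omega> - wb < quantile (F_hat N \<omega>) (\<tau>/2) \<or> Wt \<omega> - wb > quantile (F_hat N \<omega>) (1 - \<tau>/2)"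
          using a by (simp add: R_def)
        hence "Wt \<omega> \<le> x \<or> Wt \<omega> > y" using q1 q2 by auto
        hence "\<omega> \<in> E" using sp unfolding E_def Wt_def x_def y_def by auto
        thus False using nE by simp
      qed
    qed
    have bound: "measure M (R N) \<le> \<tau>' + measure M (D1 N) + measure M (D2 N)" if N: "0 < N" for N
    proof (cases "R N \<in> sets M")
      case True
      have "measure M (R N) \<le> measure M (E \<union> D1 N \<union> D2 N)"
        using sub[OF N] True Es D1s D2s by (intro finite_measure_mono) auto
      also have "\<dots> \<le> measure M (E \<union> D1 N) + measure M (D2 N)"
        using Es D1s D2s by (intro measure_Un_le) auto
      also have "\<dots> \<le> measure M E + measure M (D1 N) + measure M (D2 N)"
        using measure_Un_le[OF Es D1s[of N]] by simp
      finally show ?thesis using mE by simp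
    next
      case False
      thus ?thesis using measure_notin_sets[OF False] \<tau>' \<tau> by simp
    qed
    have ev: "eventually (\<lambda>N. ereal (measure M (R N)) \<le> ereal (\<tau>' + measure M (D1 N) + measure M (D2 N))) sequentially"
      using bound by (intro eventually_sequentiallyI[of 1]) auto
    have lim: "(\<lambda>N. ereal (\<tau>' + measure M (D1 N) + measure M (D2 N))) \<longlonglongrightarrow> ereal \<tau>'"
      using tendsto_add[OF tendsto_add[OF tendsto_const l1] l2] by simp
    have "limsup (\<lambda>N. ereal (measure M (R N))) \<le> limsup (\<lambda>N. ereal (\<tau>' + measure M (D1 N) + measure M (D2 N)))"
      by (rule Limsup_mono[OF ev])
    also have "\<dots> = ereal \<tau>'" by (rule lim_imp_Limsup[OF _ lim]) simp
    finally show ?thesis .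
  qed
  have "limsup (\<lambda>N. ereal (measure M (R N))) \<le> ereal \<tau>"
  proof (rule dense_ge_bounded[of "ereal \<tau>" "ereal 1"])
    show "ereal \<tau> < ereal 1" using \<tau> by simp
  next
    fix w :: ereal assume w: "ereal \<tau> < w" "w < ereal 1"
    then obtain r where r: "w = ereal r" by (cases w) auto
    show "limsup (\<lambda>N. ereal (measure M (R N))) \<le> w" using main[of r] w r by simp
  qed
  thus "limsup (\<lambda>N0. ereal (measure M {\<omega>\<in>space M.
         alpha_hat N0 \<omega> - alpha0 < quantile (F_hat N0 \<omega>) (\<tau>/2)
       \<or> alpha_hat N0 \<omega> - alpha0 > quantile (F_hat N0 \<omega>) (1 - \<tau>/2)})) \<le> ereal \<tau>"
    unfolding R_def .
qed

end
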